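(* For $b\ge0$ and $\lambda>0$, the integral operators $S_b(\mathrm{i}\sqrt\lambda)$ and $T_b(\mathrm{i}\sqrt\lambda)$ on $L^2(E,\mathbb{C}^2)$ with kernels $$S_b(x,x';\sqrt\lambda)=\mathrm{e}^{\mathrm{i} b\phi_2(x,x')}\mathfrak K_0^E(x,x';\sqrt\lambda),\qquad T_b(x,x';\sqrt\lambda)=\mathrm{e}^{\mathrm{i} b\phi_2(x,x')}\big(-b\tilde A(x-x')\cdot\sigma\big)\mathfrak K_0^E(x,x';\sqrt\lambda)$$ are bounded. Moreover, there exists $C>0$ such that for all $b,\lambda>0$, $\|T_b(\mathrm{i}\sqrt\lambda)\|\le C\,b\,\lambda^{-1}$.
   Context: $E=\mathbb{R}\times[0,\infty)$; $\sigma=(\sigma_1,\sigma_2)$ with Pauli matrices $\sigma_1=\begin{pmatrix}0&1\\1&0\end{pmatrix}$, $\sigma_2=\begin{pmatrix}0&-\mathrm{i}\\ \mathrm{i}&0\end{pmatrix}$; $\tilde A(x)=(-x_2,0)$; $\phi_2(x,x')=(x_1'-x_1)x_2'$. With $K_0$ the Macdonald function of order zero, $\mathfrak K_0(x,x';\sqrt\lambda)=\tfrac{\mathrm{i}\sqrt\lambda}{2\pi}K_0(\sqrt\lambda|x-x'|)I_2-\tfrac{\mathrm{i}\sqrt\lambda}{2\pi}\sigma\cdot\tfrac{x-x'}{|x-x'|}K_0'(\sqrt\lambda|x-x'|)$ (the kernel of $(-\mathrm{i}\nabla\cdot\sigma-\mathrm{i}\sqrt\lambda)^{-1}$ on $\mathbb{R}^2$),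 and $\mathfrak K_0^E(x,x';\sqrt\lambda)=\mathfrak K_0(x;(x_1',-x_2');\sqrt\lambda)\sigma_1+\mathfrak K_0(x,x';\sqrt\lambda)$ for $x,x'\in E$. *)

theory Defs
  imports "HOL-Analysis.Analysis"
begin

definition E :: "(real^2) set" where
  "E = {x. x$2 \<ge> 0}"

definition pauli1 :: "complex^2^2" where
  "pauli1 = vector [vector [0, 1], vector [1, 0]]"

definition pauli2 :: "complex^2^2" where
  "pauli2 = vector [vector [0, -\<i>], vector [\<i>, 0]]"

definition cscale :: "complex \<Rightarrow> complex^2^2 \<Rightarrow> complex^2^2" (infixr "*c" 75) where
  "c *c A = (\<chi> i j. c * A$i$j)"

definition id2 :: "complex^2^2" where
  "id2 = mat 1"

definition sigma_dot :: "real^2 \<Rightarrow> complex^2^2" where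
  "sigma_dot v = (v$1) *\<^sub>R pauli1 + (v$2) *\<^sub>R pauli2"

definition K0 :: "real \<Rightarrow> real" where
  "K0 r = (LBINT t:{0..}. exp (- r * cosh t))"

definition K0' :: "real \<Rightarrow> real" where
  "K0' r = deriv K0 r"

definition Atilde :: "real^2 \<Rightarrow> real^2" where
  "Atilde x = vector [- (x$2), 0]"

definition phi2 :: "real^2 \<Rightarrow> real^2 \<Rightarrow> real" where
  "phi2 x x' = (x'$1 - x$1) * x'$2"

text \<open>Kernel of (-i nabla.sigma - i s)^{-1} on R^2, with s = sqrt lambda.\<close>
definition Kfrak0 :: "real^2 \<Rightarrow> real^2 \<Rightarrow> real \<Rightarrow> complex^2^2" where
  "Kfrak0 x x' s =
     (\<i> * complex_of_real s / (2 * complex_of_real pi) * complex_of_real (K0 (s * norm (x - x')))) *c id2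
   - (\<i> * complex_of_real s / (2 * complex_of_real pi) * complex_of_real (K0' (s * norm (x - x'))))
       *c sigma_dot ((1 / norm (x - x')) *\<^sub>R (x - x'))"

definition reflect2 :: "real^2 \<Rightarrow> real^2" where
  "reflect2 x' = vector [x'$1, - (x'$2)]"

definition KfrakE :: "real^2 \<Rightarrow> real^2 \<Rightarrow> real \<Rightarrow> complex^2^2" where
  "KfrakE x x' s = Kfrak0 x (reflect2 x') s ** pauli1 + Kfrak0 x x' s"

definition S_kernel :: "real \<Rightarrow> real \<Rightarrow> real^2 \<Rightarrow> real^2 \<Rightarrow> complex^2^2" where
  "S_kernel b s x x' = exp (\<i> * complex_of_real (b * phi2 x x')) *c KfrakE x x' s"

definition T_kernel :: "real \<Rightarrow> real \<Rightarrow> real^2 \<Rightarrow> real^2 \<Rightarrow> complex^2^2" where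
  "T_kernel b s x x' = exp (\<i> * complex_of_real (b * phi2 x x'))
      *c (sigma_dot (- b *\<^sub>R Atilde (x - x')) ** KfrakE x x' s)"

definition L2 :: "(real^2) set \<Rightarrow> (real^2 \<Rightarrow> complex^2) set" where
  "L2 S = {f. f \<in> borel_measurable (lebesgue_on S) \<and>
              integrable (lebesgue_on S) (\<lambda>x. (norm (f x))^2)}"

definition L2norm :: "(real^2) set \<Rightarrow> (real^2 \<Rightarrow> complex^2) \<Rightarrow> real" where
  "L2norm S f = sqrt (\<integral>x. (norm (f x))^2 \<partial>lebesgue_on S)"

definition int_op :: "(real^2) set \<Rightarrow> (real^2 \<Rightarrow> real^2 \<Rightarrow> complex^2^2)
                       \<Rightarrow> (real^2 \<Rightarrow> complex^2) \<Rightarrow> real^2 \<Rightarrow> complex^2" where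
  "int_op S K f = (\<lambda>x. \<integral>x'. K x x' *v f x' \<partial>lebesgue_on S)"

definition bounded_int_op :: "(real^2) set \<Rightarrow> (real^2 \<Rightarrow> real^2 \<Rightarrow> complex^2^2) \<Rightarrow> real \<Rightarrow> bool" where
  "bounded_int_op S K M \<longleftrightarrow>
     (\<forall>f \<in> L2 S.
        (AE x in lebesgue_on S. integrable (lebesgue_on S) (\<lambda>x'. K x x' *v f x')) \<and>
        int_op S K f \<in> L2 S \<and>
        L2norm S (int_op S K f) \<le> M * L2norm S f)"

end

theory Submission
  imports Defs "HOL-Real_Asymp.Real_Asymp"
begin

definition mn :: "complex^2^2 \<Rightarrow> real" where
  "mn A = (\<Sum>i\<in>UNIV. \<Sum>j\<in>UNIV. norm (A$i$j))"
lemma mn_nonneg: "0 \<le> mn A"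
  unfolding mn_def by (intro sum_nonneg) auto
lemma norm_le_sum_cvec: "norm (v::complex^2) \<le> (\<Sum>i\<in>UNIV. norm (v$i))"
  unfolding norm_vec_def by (rule L2_set_le_sum) auto
lemma mn_mult_vec: "norm (A *v v) \<le> mn A * norm v"
proof -
  have "norm (A *v v) \<le> (\<Sum>i\<in>UNIV. norm ((A *v v)$i))" by (rule norm_le_sum_cvec)
  also have "\<dots> \<le> (\<Sum>i\<in>UNIV. (\<Sum>j\<in>UNIV. norm (A$i$j)) * norm v)"
  proof (rule sum_mono)
    fix i
    have "norm ((A *v v)$i) = norm (\<Sum>j\<in>UNIV. A$i$j * v$j)"
      by (simp add: matrix_vector_mult_def)
    also have "\<dots> \<le> (\<Sum>j\<in>UNIV. norm (A$i$j * v$j))" by (rule norm_sum)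
    also have "\<dots> \<le> (\<Sum>j\<in>UNIV. norm (A$i$j) * norm v)"
    proof (rule sum_mono)
      fix j
      show "norm (A$i$j * v$j) \<le> norm (A$i$j) * norm v"
        unfolding norm_mult by (rule mult_left_mono[OF Finite_Cartesian_Product.norm_nth_le norm_ge_zero])
    qed
    finally show "norm ((A *v v)$i) \<le> (\<Sum>j\<in>UNIV. norm (A$i$j)) * norm v"
      by (simp add: sum_distrib_right)
  qed
  finally show ?thesis by (simp add: mn_def sum_distrib_right)
qed

lemma mn_2: "mn A = norm (A$1$1) + norm (A$1$2) + norm (A$2$1) + norm (A$2$2)"
  by (simp add: mn_def sum_2)

lemma aux_prod16:
  fixes a11 a12 a21 a22 b11 b12 b21 b22 :: real
  assumes "0 \<le> a11" "0 \<le> a12" "0 \<le> a21" "0 \<le> a22" "0 \<le> b11" "0 \<le> b12" "0 \<le> b21" "0 \<le> b22"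
  shows "(a11*b11 + a12*b21) + (a11*b12 + a12*b22) + (a21*b11 + a22*b21) + (a21*b12+a22*b22)
     \<le> (a11+a12+a21+a22)*(b11+b12+b21+b22)"
proof -
  have "0 \<le> a11*b21" "0 \<le> a11*b22" "0 \<le> a12*b11" "0 \<le> a12*b12" "0 \<le> a21*b21" "0 \<le> a21*b22"
    "0 \<le> a22*b11" "0 \<le> a22*b12" using assms by auto
  then show ?thesis by (simp add: algebra_simps)
qed

lemma mn_mult: "mn (A ** B) \<le> mn A * mn B"
proof -
  have e: "(A ** B)$i$j = A$i$1 * B$1$j + A$i$2 * B$2$j" for i j
    by (simp add: matrix_matrix_mult_def sum_2)
  have t: "norm ((A ** B)$i$j) \<le> norm (A$i$1) * norm (B$1$j) + norm (A$i$2) * norm (B$2$j)" for i j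
    unfolding e by (rule order_trans[OF norm_triangle_ineq]) (simp add: norm_mult)
  have "mn (A ** B) \<le> (norm (A$1$1) * norm (B$1$1) + norm (A$1$2) * norm (B$2$1)) +
     (norm (A$1$1) * norm (B$1$2) + norm (A$1$2) * norm (B$2$2)) +
     (norm (A$2$1) * norm (B$1$1) + norm (A$2$2) * norm (B$2$1)) +
     (norm (A$2$1) * norm (B$1$2) + norm (A$2$2) * norm (B$2$2))"
    unfolding mn_2 using t[of 1 1] t[of 1 2] t[of 2 1] t[of 2 2] by linarith
  also have "\<dots> \<le> mn A * mn B" unfolding mn_2 by (rule aux_prod16) auto
  finally show ?thesis .
qed

lemma mn_add: "mn (A + B) \<le> mn A + mn B"
proof -
  have "mn (A + B) = (\<Sum>i\<in>UNIV. \<Sum>j\<in>UNIV. norm (A$i$j + B$i$j))" by (simp add: mn_def)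
  also have "\<dots> \<le> (\<Sum>i\<in>UNIV. \<Sum>j\<in>UNIV. norm (A$i$j) + norm (B$i$j))"
    by (intro sum_mono norm_triangle_ineq)
  also have "\<dots> = mn A + mn B" by (simp add: mn_def sum.distrib)
  finally show ?thesis .
qed

lemma mn_diff: "mn (A - B) \<le> mn A + mn B"
proof -
  have "mn (A - B) = (\<Sum>i\<in>UNIV. \<Sum>j\<in>UNIV. norm (A$i$j - B$i$j))" by (simp add: mn_def)
  also have "\<dots> \<le> (\<Sum>i\<in>UNIV. \<Sum>j\<in>UNIV. norm (A$i$j) + norm (B$i$j))"
    by (intro sum_mono norm_triangle_ineq4)
  also have "\<dots> = mn A + mn B" by (simp add: mn_def sum.distrib)
  finally show ?thesis .
qed

lemma mn_cscale: "mn (c *c A) = norm c * mn A"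
  unfolding mn_2 cscale_def by (simp add: norm_mult algebra_simps)

lemma mn_scaleR: "mn (r *\<^sub>R A) = \<bar>r\<bar> * mn A"
  unfolding mn_2 by (simp add: algebra_simps)

lemma mn_id2: "mn id2 = 2"
  unfolding mn_2 id2_def by (simp add: mat_def)

lemma mn_pauli1: "mn pauli1 = 2"
  unfolding mn_2 pauli1_def by simp

lemma mn_pauli2: "mn pauli2 = 2"
  unfolding mn_2 pauli2_def by simp

lemma mn_sigma: "mn (sigma_dot v) \<le> 2 * (\<bar>v$1\<bar> + \<bar>v$2\<bar>)"
proof -
  have "mn (sigma_dot v) \<le> mn ((v$1) *\<^sub>R pauli1) + mn ((v$2) *\<^sub>R pauli2)"
    unfolding sigma_dot_def by (rule mn_add)
  then show ?thesis by (simp add: mn_scaleR mn_pauli1 mn_pauli2)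
qed

lemma id_leb_meas: "(\<lambda>x. x) \<in> borel_measurable (lebesgue_on (S::('a::euclidean_space) set))"
  by (intro measurable_restrict_space1 measurable_completion measurable_ident_sets) simp

lemma sf_completion_lborel: "sigma_finite_measure (completion (lborel::('a::euclidean_space) measure))"
proof -
  obtain A where A: "countable A" "A \<subseteq> sets (lborel::'a measure)" "\<Union>A = space (lborel::'a measure)"
      "\<forall>a\<in>A. emeasure lborel a \<noteq> \<infinity>"
    using sigma_finite_lborel unfolding sigma_finite_measure_def by blast
  show ?thesis unfolding sigma_finite_measure_def
    by (rule exI[of _ A]) (use A in auto)
qed

lemma sf_lebesgue_on: "S \<in> sets lebesgue \<Longrightarrow> sigma_finite_measure (lebesgue_on S)"
  by (rule sigma_finite_measure_restrict_space[OF sf_completion_lborel]) auto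

lemma mvec_meas:
  fixes F :: "'a \<Rightarrow> complex^2^2" and G :: "'a \<Rightarrow> complex^2"
  assumes "F \<in> borel_measurable N" "G \<in> borel_measurable N"
  shows "(\<lambda>z. F z *v G z) \<in> borel_measurable N"
proof -
  have c: "continuous_on UNIV (\<lambda>p::(complex^2^2) \<times> (complex^2). fst p *v snd p)"
    unfolding matrix_vector_mult_def by (intro continuous_intros)
  show ?thesis by (rule borel_measurable_continuous_Pair[OF assms c])
qed

lemma lb_affine1:
  fixes h :: "'a::euclidean_space \<Rightarrow> ennreal"
  assumes [measurable]: "h \<in> borel_measurable borel" and c: "\<bar>c\<bar> = 1"
  shows "(\<integral>\<^sup>+x. h x \<partial>lborel) = (\<integral>\<^sup>+y. h (t + c *\<^sub>R y) \<partial>lborel)"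
proof -
  have "c \<noteq> 0" using c by auto
  show ?thesis
    by (subst lborel_affine[OF \<open>c\<noteq>0\<close>, of t]) (simp add: nn_integral_density nn_integral_distr c)
qed

lemma shift_int1:
  fixes k :: "'a::euclidean_space \<Rightarrow> real"
  assumes [measurable]: "k \<in> borel_measurable borel" and S: "S \<in> sets borel"
  shows "(\<integral>\<^sup>+x'. ennreal (k (x - x')) \<partial>lebesgue_on S) \<le> (\<integral>\<^sup>+y. ennreal (k y) \<partial>lborel)"
proof -
  have "(\<integral>\<^sup>+x'. ennreal (k (x - x')) \<partial>lebesgue_on S)
      = (\<integral>\<^sup>+x'. ennreal (k (x - x')) * indicator S x' \<partial>completion lborel)"
    using S by (subst nn_integral_restrict_space) auto
  also have "\<dots> = (\<integral>\<^sup>+x'. ennreal (k (x - x')) * indicator S x' \<partial>lborel)"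
    by (rule nn_integral_completion)
  also have "\<dots> \<le> (\<integral>\<^sup>+x'. ennreal (k (x - x')) \<partial>lborel)"
    by (intro nn_integral_mono) (auto simp: indicator_def)
  also have "\<dots> = (\<integral>\<^sup>+y. ennreal (k (x - (x + (-1) *\<^sub>R y))) \<partial>lborel)"
    by (rule lb_affine1) auto
  finally show ?thesis by simp
qed

lemma shift_int2:
  fixes k :: "'a::euclidean_space \<Rightarrow> real"
  assumes [measurable]: "k \<in> borel_measurable borel" and S: "S \<in> sets borel"
  shows "(\<integral>\<^sup>+x. ennreal (k (x - x')) \<partial>lebesgue_on S) \<le> (\<integral>\<^sup>+y. ennreal (k y) \<partial>lborel)"
proof -
  have "(\<integral>\<^sup>+x. ennreal (k (x - x')) \<partial>lebesgue_on S)
      = (\<integral>\<^sup>+x. ennreal (k (x - x')) * indicator S x \<partial>completion lborel)"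
    using S by (subst nn_integral_restrict_space) auto
  also have "\<dots> = (\<integral>\<^sup>+x. ennreal (k (x - x')) * indicator S x \<partial>lborel)"
    by (rule nn_integral_completion)
  also have "\<dots> \<le> (\<integral>\<^sup>+x. ennreal (k (x - x')) \<partial>lborel)"
    by (intro nn_integral_mono) (auto simp: indicator_def)
  also have "\<dots> = (\<integral>\<^sup>+y. ennreal (k ((x' + 1 *\<^sub>R y) - x')) \<partial>lborel)"
    by (rule lb_affine1) auto
  finally show ?thesis by simp
qed

lemma schur:
  fixes K :: "real^2 \<Rightarrow> real^2 \<Rightarrow> complex^2^2" and k :: "real^2 \<Rightarrow> real" and S :: "(real^2) set"
  assumes S: "S \<in> sets borel"
    and Km: "(\<lambda>p. K (fst p) (snd p)) \<in> borel_measurable (lebesgue_on S \<Otimes>\<^sub>M lebesgue_on S)"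
    and km[measurable]: "k \<in> borel_measurable borel" and k0: "\<And>y. 0 \<le> k y"
    and kint: "(\<integral>\<^sup>+y. ennreal (k y) \<partial>lborel) \<le> ennreal A" and A0: "0 \<le> A"
    and bnd: "\<And>x. x \<in> S \<Longrightarrow> AE x' in lebesgue_on S. mn (K x x') \<le> k (x - x')"
  shows "bounded_int_op S K A"
  unfolding bounded_int_op_def
proof (intro ballI)
  fix f assume fL2: "f \<in> L2 S"
  define M where "M = lebesgue_on S"
  have Sl: "S \<in> sets lebesgue" using S by auto
  interpret sf: sigma_finite_measure M unfolding M_def by (rule sf_lebesgue_on[OF Sl])
  interpret pair: pair_sigma_finite M M ..
  have fm[measurable]: "f \<in> borel_measurable M" and fint: "integrable M (\<lambda>x. (norm (f x))^2)"
    using fL2 unfolding L2_def M_def by auto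
  define g where "g x = norm (f x)" for x
  have gm[measurable]: "g \<in> borel_measurable M" unfolding g_def by measurable
  have g0: "0 \<le> g x" for x unfolding g_def by simp
  have idm[measurable]: "(\<lambda>x. x) \<in> borel_measurable M" unfolding M_def by (rule id_leb_meas)
  have Km'[measurable]: "(\<lambda>p. K (fst p) (snd p)) \<in> borel_measurable (M \<Otimes>\<^sub>M M)"
    using Km unfolding M_def .
  have dm[measurable]: "(\<lambda>p. k (fst p - snd p)) \<in> borel_measurable (M \<Otimes>\<^sub>M M)"
    by measurable
  define F where "F = (\<integral>\<^sup>+x. ennreal (g x ^ 2) \<partial>M)"
  have F_fin: "F < \<infinity>"
    using fint unfolding integrable_iff_bounded F_def g_def by simp
  have F_eq: "(\<integral>x. g x ^ 2 \<partial>M) = enn2real F"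
    unfolding F_def by (rule integral_eq_nn_integral) auto
  have tr1: "(\<integral>\<^sup>+x'. ennreal (k (x - x')) \<partial>M) \<le> ennreal A" for x
    unfolding M_def using shift_int1[OF km S, of x] kint by (rule order_trans)
  have tr2: "(\<integral>\<^sup>+x. ennreal (k (x - x')) \<partial>M) \<le> ennreal A" for x'
    unfolding M_def using shift_int2[OF km S, of x'] kint by (rule order_trans)
  define Phi where "Phi x = (\<integral>\<^sup>+x'. ennreal (k (x - x') * g x') \<partial>M)" for x
  have Phim[measurable]: "Phi \<in> borel_measurable M" unfolding Phi_def by measurable
  have CS: "(Phi x)^2 \<le> ennreal A * (\<integral>\<^sup>+x'. ennreal (k (x - x') * g x' ^ 2) \<partial>M)" for x
  proof -
    have m1[measurable]: "(\<lambda>x'. ennreal (sqrt (k (x - x')))) \<in> borel_measurable M" by measurable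
    have m2[measurable]: "(\<lambda>x'. ennreal (sqrt (k (x - x')) * g x')) \<in> borel_measurable M" by measurable
    have "(Phi x)^2 = (\<integral>\<^sup>+x'. ennreal (sqrt (k (x - x'))) * ennreal (sqrt (k (x - x')) * g x') \<partial>M)^2"
      unfolding Phi_def
      by (intro arg_cong[where f="\<lambda>z. z^2"] nn_integral_cong)
         (simp add: ennreal_mult'[symmetric] k0 g0 mult.assoc[symmetric] real_sqrt_mult[symmetric])
    also have "\<dots> \<le> (\<integral>\<^sup>+x'. ennreal (sqrt (k (x - x'))) ^ 2 \<partial>M) *
                    (\<integral>\<^sup>+x'. ennreal (sqrt (k (x - x')) * g x') ^ 2 \<partial>M)"
      by (rule Cauchy_Schwarz_nn_integral) measurable
    also have "\<dots> = (\<integral>\<^sup>+x'. ennreal (k (x - x')) \<partial>M) *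
                    (\<integral>\<^sup>+x'. ennreal (k (x - x') * g x' ^ 2) \<partial>M)"
      by (intro arg_cong2[where f="(*)"] nn_integral_cong)
         (simp_all add: ennreal_power k0 g0 power_mult_distrib)
    also have "\<dots> \<le> ennreal A * (\<integral>\<^sup>+x'. ennreal (k (x - x') * g x' ^ 2) \<partial>M)"
      by (intro mult_right_mono tr1) simp
    finally show ?thesis .
  qed
  have Phi2: "(\<integral>\<^sup>+x. (Phi x)^2 \<partial>M) \<le> ennreal (A^2) * F"
  proof -
    have I1: "(\<integral>\<^sup>+x. (\<integral>\<^sup>+x'. ennreal (k (x - x') * g x' ^ 2) \<partial>M) \<partial>M)
        = (\<integral>\<^sup>+x'. (\<integral>\<^sup>+x. ennreal (k (x - x') * g x' ^ 2) \<partial>M) \<partial>M)"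
      by (rule pair.Fubini'[symmetric]) measurable
    also have "\<dots> = (\<integral>\<^sup>+x'. ennreal (g x' ^ 2) * (\<integral>\<^sup>+x. ennreal (k (x - x')) \<partial>M) \<partial>M)"
      by (intro nn_integral_cong)
         (simp add: nn_integral_cmult[symmetric] ennreal_mult'[symmetric] k0 g0 mult.commute)
    also have "\<dots> \<le> (\<integral>\<^sup>+x'. ennreal (g x' ^ 2) * ennreal A \<partial>M)"
      by (intro nn_integral_mono mult_left_mono tr2) auto
    also have "\<dots> = F * ennreal A"
      unfolding F_def by (rule nn_integral_multc) measurable
    finally have I2: "(\<integral>\<^sup>+x. (\<integral>\<^sup>+x'. ennreal (k (x - x') * g x' ^ 2) \<partial>M) \<partial>M) \<le> F * ennreal A" .
    have "(\<integral>\<^sup>+x. (Phi x)^2 \<partial>M) \<le> (\<integral>\<^sup>+x. ennreal A * (\<integral>\<^sup>+x'. ennreal (k (x - x') * g x' ^ 2) \<partial>M) \<partial>M)"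
      by (intro nn_integral_mono CS)
    also have "\<dots> = ennreal A * (\<integral>\<^sup>+x. (\<integral>\<^sup>+x'. ennreal (k (x - x') * g x' ^ 2) \<partial>M) \<partial>M)"
      by (rule nn_integral_cmult) measurable
    also have "\<dots> \<le> ennreal A * (F * ennreal A)"
      by (intro mult_left_mono I2) simp
    also have "ennreal A * (F * ennreal A) = ennreal (A^2) * F"
      by (simp add: power2_eq_square ennreal_mult A0 mult_ac)
    finally show ?thesis .
  qed
  have RHS_fin: "ennreal (A^2) * F < \<infinity>" using F_fin by (simp add: ennreal_mult_less_top)
  have Phi_fin: "AE x in M. Phi x \<noteq> \<infinity>"
  proof -
    have "(\<integral>\<^sup>+x. (Phi x)^2 \<partial>M) < \<infinity>"
      using Phi2 RHS_fin by (rule order_le_less_trans)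
    moreover have m: "(\<lambda>x. (Phi x)^2) \<in> borel_measurable M" by measurable
    ultimately have "AE x in M. (Phi x)^2 \<noteq> \<infinity>" using nn_integral_PInf_AE[OF m] by simp
    then show ?thesis by eventually_elim (simp add: power_eq_top_ennreal)
  qed
  have hm: "(\<lambda>x'. K x x' *v f x') \<in> borel_measurable M" if "x \<in> space M" for x
  proof -
    have "(\<lambda>x'. K x x') \<in> borel_measurable M"
      using measurable_compose[OF measurable_Pair1'[OF that] Km'] by simp
    then show ?thesis by (intro mvec_meas fm)
  qed
  define T where "T = int_op S K f"
  have key: "AE x in M. integrable M (\<lambda>x'. K x x' *v f x') \<and> ennreal (norm (T x)) \<le> Phi x"
    using Phi_fin AE_space
  proof eventually_elim
    fix x assume fin: "Phi x \<noteq> \<infinity>" and xs: "x \<in> space M"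
    have xS: "x \<in> S" using xs unfolding M_def by simp
    have b: "(\<integral>\<^sup>+x'. ennreal (norm (K x x' *v f x')) \<partial>M) \<le> Phi x"
      unfolding Phi_def
    proof (rule nn_integral_mono_AE)
      show "AE x' in M. ennreal (norm (K x x' *v f x')) \<le> ennreal (k (x - x') * g x')"
        using bnd[OF xS] unfolding M_def[symmetric]
      proof eventually_elim
        fix x' assume "mn (K x x') \<le> k (x - x')"
        then have "mn (K x x') * g x' \<le> k (x - x') * g x'"
          by (rule mult_right_mono) (rule g0)
        then have "norm (K x x' *v f x') \<le> k (x - x') * g x'"
          using mn_mult_vec[of "K x x'" "f x'"] unfolding g_def by linarith
        then show "ennreal (norm (K x x' *v f x')) \<le> ennreal (k (x - x') * g x')"
          by (rule ennreal_leI)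
      qed
    qed
    have int: "integrable M (\<lambda>x'. K x x' *v f x')"
      unfolding integrable_iff_bounded using hm[OF xs] b fin
      by (simp add: order_le_less_trans top.not_eq_extremum)
    have "ennreal (norm (T x)) \<le> (\<integral>\<^sup>+x'. ennreal (norm (K x x' *v f x')) \<partial>M)"
      unfolding T_def int_op_def M_def[symmetric] by (rule integral_norm_bound_ennreal[OF int])
    with b int show "integrable M (\<lambda>x'. K x x' *v f x') \<and> ennreal (norm (T x)) \<le> Phi x"
      by auto
  qed
  have Tm[measurable]: "T \<in> borel_measurable M"
  proof -
    have "(\<lambda>p. K (fst p) (snd p) *v f (snd p)) \<in> borel_measurable (M \<Otimes>\<^sub>M M)"
      by (intro mvec_meas Km') measurable
    then have "(\<lambda>x. \<integral>x'. K x x' *v f x' \<partial>M) \<in> borel_measurable M"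
      by (intro sf.borel_measurable_lebesgue_integral) (simp add: case_prod_beta')
    then show ?thesis unfolding T_def int_op_def M_def .
  qed
  have T2: "(\<integral>\<^sup>+x. ennreal ((norm (T x))^2) \<partial>M) \<le> ennreal (A^2) * F"
  proof -
    have "(\<integral>\<^sup>+x. ennreal ((norm (T x))^2) \<partial>M) \<le> (\<integral>\<^sup>+x. (Phi x)^2 \<partial>M)"
    proof (rule nn_integral_mono_AE)
      show "AE x in M. ennreal ((norm (T x))^2) \<le> (Phi x)^2"
        using key
      proof eventually_elim
        fix x assume "integrable M (\<lambda>x'. K x x' *v f x') \<and> ennreal (norm (T x)) \<le> Phi x"
        then have "(ennreal (norm (T x)))^2 \<le> (Phi x)^2" by (intro power_mono) auto
        then show "ennreal ((norm (T x))^2) \<le> (Phi x)^2" by (simp add: ennreal_power)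
      qed
    qed
    then show ?thesis using Phi2 by (rule order_trans)
  qed
  have T2fin: "(\<integral>\<^sup>+x. ennreal ((norm (T x))^2) \<partial>M) < \<infinity>"
    using T2 RHS_fin by (rule order_le_less_trans)
  have TL2: "T \<in> L2 S"
    unfolding L2_def M_def[symmetric] using Tm T2fin by (simp add: integrable_iff_bounded)
  have nT: "(\<integral>x. (norm (T x))^2 \<partial>M) = enn2real (\<integral>\<^sup>+x. ennreal ((norm (T x))^2) \<partial>M)"
    by (rule integral_eq_nn_integral) auto
  have "(\<integral>x. (norm (T x))^2 \<partial>M) \<le> enn2real (ennreal (A^2) * F)"
    unfolding nT using T2 RHS_fin by (intro enn2real_mono) auto
  also have "\<dots> = A^2 * enn2real F" by (simp add: enn2real_mult)
  finally have le: "(\<integral>x. (norm (T x))^2 \<partial>M) \<le> A^2 * (\<integral>x. g x ^ 2 \<partial>M)"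
    using F_eq by simp
  have "L2norm S T \<le> A * L2norm S f"
  proof -
    have "L2norm S T = sqrt (\<integral>x. (norm (T x))^2 \<partial>M)" unfolding L2norm_def M_def ..
    also have "\<dots> \<le> sqrt (A^2 * (\<integral>x. g x ^ 2 \<partial>M))" using le by simp
    also have "\<dots> = A * sqrt (\<integral>x. g x ^ 2 \<partial>M)" using A0 by (simp add: real_sqrt_mult)
    also have "\<dots> = A * L2norm S f" unfolding L2norm_def M_def g_def ..
    finally show ?thesis .
  qed
  then show "(AE x in lebesgue_on S. integrable (lebesgue_on S) (\<lambda>x'. K x x' *v f x')) \<and>
        int_op S K f \<in> L2 S \<and> L2norm S (int_op S K f) \<le> A * L2norm S f"
    using key TL2 unfolding T_def M_def by (auto elim: AE_mp)
qed

definition K1 :: "real \<Rightarrow> real" where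
  "K1 r = (LBINT t:{0..}. cosh t * exp (- r * cosh t))"

lemma cosh_meas[measurable]: "cosh \<in> borel_measurable (borel::real measure)"
  by (intro borel_measurable_continuous_onI continuous_intros)

lemma K0_meas[measurable]: "K0 \<in> borel_measurable borel"
  unfolding K0_def[abs_def] set_lebesgue_integral_def by measurable

lemma K1_meas[measurable]: "K1 \<in> borel_measurable borel"
  unfolding K1_def[abs_def] set_lebesgue_integral_def by measurable

lemma D_int:
  assumes a: "a > 0"
  shows "(\<integral>\<^sup>+t. ennreal (exp t * exp (- a * exp t)) * indicator {0..} t \<partial>lborel) = ennreal (exp (- a) / a)"
proof -
  have "(\<integral>\<^sup>+t. ennreal (exp t * exp (- a * exp t)) * indicator {0..} t \<partial>lborel)
      = ennreal (0 - (- exp (- a * exp 0) / a))"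
  proof (rule nn_integral_FTC_atLeast)
    show "(\<lambda>t. exp t * exp (- a * exp t)) \<in> borel_measurable borel" by measurable
    show "DERIV (\<lambda>t. - exp (- a * exp t) / a) x :> exp x * exp (- a * exp x)" for x
      using a by (auto intro!: derivative_eq_intros simp: field_simps)
    show "0 \<le> exp x * exp (- a * exp x)" for x by simp
    show "((\<lambda>t. - exp (- a * exp t) / a) \<longlongrightarrow> 0) at_top"
      using a by real_asymp
  qed
  then show ?thesis by simp
qed

lemma cosh_ge_half_exp: "exp t / 2 \<le> cosh (t::real)"
  unfolding cosh_def by (simp add: divide_right_mono)

lemma cosh_le_exp: "0 \<le> t \<Longrightarrow> cosh (t::real) \<le> exp t"
  unfolding cosh_def using exp_le_cancel_iff[of "-t" t] by simp

lemma dom0: "0 < (r::real) \<Longrightarrow> exp (- r * cosh t) \<le> exp (- (r/2) * exp t)"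
  using cosh_ge_half_exp[of t] by (simp add: mult_left_mono)

lemma dom1: "0 < (r::real) \<Longrightarrow> 0 \<le> t \<Longrightarrow> exp (- r * cosh t) \<le> exp t * exp (- (r/2) * exp t)"
proof -
  assume r: "0 < r" and t: "0 \<le> t"
  have "exp (- r * cosh t) \<le> 1 * exp (- (r/2) * exp t)" using dom0[OF r] by simp
  also have "\<dots> \<le> exp t * exp (- (r/2) * exp t)" using t by (intro mult_right_mono) auto
  finally show ?thesis .
qed

lemma dom2: "0 < (r::real) \<Longrightarrow> 0 \<le> t \<Longrightarrow> cosh t * exp (- r * cosh t) \<le> exp t * exp (- (r/2) * exp t)"
  by (intro mult_mono cosh_le_exp dom0) auto

lemma Dn_nn:
  assumes r: "0 < (r::real)"
  shows "(\<integral>\<^sup>+t. ennreal (indicator {0..} t * (exp t * exp (- (r/2) * exp t))) \<partial>lborel) = ennreal (2 * exp (- r/2) / r)"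
proof -
  have "(\<integral>\<^sup>+t. ennreal (indicator {0..} t * (exp t * exp (- (r/2) * exp t))) \<partial>lborel)
     = (\<integral>\<^sup>+t. ennreal (exp t * exp (- (r/2) * exp t)) * indicator {0..} t \<partial>lborel)"
    by (intro nn_integral_cong) (simp split: split_indicator)
  also have "\<dots> = ennreal (exp (- (r/2)) / (r/2))" using r by (intro D_int) simp
  finally show ?thesis by (simp add: field_simps)
qed

lemma Dn_integrable:
  assumes r: "0 < (r::real)"
  shows "integrable lborel (\<lambda>t. indicator {0..} t * (exp t * exp (- (r/2) * exp t)))"
  unfolding integrable_iff_bounded
proof
  show "(\<lambda>t. indicator {0..} t * (exp t * exp (- (r/2) * exp t))) \<in> borel_measurable lborel" by measurable
  have "(\<integral>\<^sup>+t. ennreal (norm (indicator {0..} t * (exp t * exp (- (r/2) * exp t)))) \<partial>lborel)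
     = (\<integral>\<^sup>+t. ennreal (indicator {0..} t * (exp t * exp (- (r/2) * exp t))) \<partial>lborel)"
    by (intro nn_integral_cong) (simp split: split_indicator)
  then show "(\<integral>\<^sup>+t. ennreal (norm (indicator {0..} t * (exp t * exp (- (r/2) * exp t)))) \<partial>lborel) < \<infinity>"
    using Dn_nn[OF r] by simp
qed

lemma K0_integrable:
  assumes r: "0 < (r::real)"
  shows "integrable lborel (\<lambda>t. indicator {0..} t *\<^sub>R exp (- r * cosh t))"
proof (rule Bochner_Integration.integrable_bound[OF Dn_integrable[OF r]])
  show "(\<lambda>t. indicator {0..} t *\<^sub>R exp (- r * cosh t)) \<in> borel_measurable lborel" by measurable
  show "AE t in lborel. norm (indicator {0..} t *\<^sub>R exp (- r * cosh t))
      \<le> norm (indicator {0..} t * (exp t * exp (- (r/2) * exp t)))"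
  proof (intro AE_I2)
    fix t :: real
    show "norm (indicator {0..} t *\<^sub>R exp (- r * cosh t))
      \<le> norm (indicator {0..} t * (exp t * exp (- (r/2) * exp t)))"
      using dom1[OF r, of t] by (simp split: split_indicator)
  qed
qed

lemma K1_integrable:
  assumes r: "0 < (r::real)"
  shows "integrable lborel (\<lambda>t. indicator {0..} t *\<^sub>R (cosh t * exp (- r * cosh t)))"
proof (rule Bochner_Integration.integrable_bound[OF Dn_integrable[OF r]])
  show "(\<lambda>t. indicator {0..} t *\<^sub>R (cosh t * exp (- r * cosh t))) \<in> borel_measurable lborel" by measurable
  show "AE t in lborel. norm (indicator {0..} t *\<^sub>R (cosh t * exp (- r * cosh t)))
      \<le> norm (indicator {0..} t * (exp t * exp (- (r/2) * exp t)))"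
  proof (intro AE_I2)
    fix t :: real
    have "0 < cosh t" by (rule cosh_real_pos)
    then show "norm (indicator {0..} t *\<^sub>R (cosh t * exp (- r * cosh t)))
      \<le> norm (indicator {0..} t * (exp t * exp (- (r/2) * exp t)))"
      using dom2[OF r, of t] by (simp split: split_indicator)
  qed
qed

lemma bound_via_Dn:
  fixes h :: "real \<Rightarrow> real"
  assumes r: "0 < (r::real)" and int: "integrable lborel h"
    and hb: "\<And>t. norm (h t) \<le> indicator {0..} t * (exp t * exp (- (r/2) * exp t))"
  shows "\<bar>integral\<^sup>L lborel h\<bar> \<le> 2 * exp (- r/2) / r"
proof -
  have "ennreal (norm (integral\<^sup>L lborel h)) \<le> (\<integral>\<^sup>+t. ennreal (norm (h t)) \<partial>lborel)"
    by (rule integral_norm_bound_ennreal[OF int])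
  also have "\<dots> \<le> (\<integral>\<^sup>+t. ennreal (indicator {0..} t * (exp t * exp (- (r/2) * exp t))) \<partial>lborel)"
    by (intro nn_integral_mono ennreal_leI hb)
  also have "\<dots> = ennreal (2 * exp (- r/2) / r)" by (rule Dn_nn[OF r])
  finally show ?thesis using r by (simp add: ennreal_le_iff)
qed

lemma K0_bound: "0 < (r::real) \<Longrightarrow> \<bar>K0 r\<bar> \<le> 2 * exp (- r/2) / r"
  unfolding K0_def set_lebesgue_integral_def
proof (rule bound_via_Dn[OF _ K0_integrable])
  fix t :: real assume r: "0 < r"
  show "norm (indicator {0..} t *\<^sub>R exp (- r * cosh t)) \<le> indicator {0..} t * (exp t * exp (- (r/2) * exp t))"
    using dom1[OF r, of t] by (simp split: split_indicator)
qed

lemma K1_bound: "0 < (r::real) \<Longrightarrow> \<bar>K1 r\<bar> \<le> 2 * exp (- r/2) / r"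
  unfolding K1_def set_lebesgue_integral_def
proof (rule bound_via_Dn[OF _ K1_integrable])
  fix t :: real assume r: "0 < r"
  have "0 < cosh t" by (rule cosh_real_pos)
  then show "norm (indicator {0..} t *\<^sub>R (cosh t * exp (- r * cosh t))) \<le> indicator {0..} t * (exp t * exp (- (r/2) * exp t))"
    using dom2[OF r, of t] by (simp split: split_indicator)
qed

lemma exp_diff_bound: "\<bar>exp u - exp v\<bar> \<le> \<bar>u - v\<bar> * exp (max u v)" for u v :: real
proof -
  have main: "exp b - exp a \<le> (b - a) * exp b" if "a \<le> b" for a b :: real
  proof -
    have "1 + (a - b) \<le> exp (a - b)" by (rule exp_ge_add_one_self)
    then have "exp b * (1 + (a - b)) \<le> exp b * exp (a - b)" by (intro mult_left_mono) auto
    also have "\<dots> = exp a" by (simp add: exp_diff)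
    finally show ?thesis by (simp add: algebra_simps)
  qed
  show ?thesis
  proof (cases "u \<le> v")
    case True
    then show ?thesis using main[OF True] by (simp add: max_def abs_if)
  next
    case False
    then show ?thesis using main[of v u] by (simp add: max_def abs_if)
  qed
qed

lemma quot_bound:
  fixes r h c :: real
  assumes r: "0 < r" and h: "\<bar>h\<bar> \<le> r/2" "h \<noteq> 0" and c: "0 \<le> c"
  shows "\<bar>(exp (- (r + h) * c) - exp (- r * c)) / h\<bar> \<le> c * exp (- (r/2) * c)"
proof -
  have "\<bar>exp (- (r + h) * c) - exp (- r * c)\<bar> \<le> \<bar>(- (r + h) * c) - (- r * c)\<bar> * exp (max (- (r + h) * c) (- r * c))"
    by (rule exp_diff_bound)
  also have "\<dots> \<le> (\<bar>h\<bar> * c) * exp (- (r/2) * c)"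
  proof (rule mult_mono)
    show "\<bar>(- (r + h) * c) - (- r * c)\<bar> \<le> \<bar>h\<bar> * c" using c by (simp add: algebra_simps abs_mult)
    have "- (r + h) * c \<le> - (r/2) * c" using h c by (intro mult_right_mono) auto
    moreover have "- r * c \<le> - (r/2) * c" using r c by (intro mult_right_mono) auto
    ultimately show "exp (max (- (r + h) * c) (- r * c)) \<le> exp (- (r/2) * c)" by simp
  qed (use c in auto)
  finally have "\<bar>exp (- (r + h) * c) - exp (- r * c)\<bar> \<le> \<bar>h\<bar> * (c * exp (- (r/2) * c))"
    by (simp add: mult_ac)
  then show ?thesis using h by (simp add: divide_le_eq abs_divide mult.commute)
qed

lemma K0_quot:
  fixes r h :: real
  assumes r: "0 < r" and rh: "0 < r + h"
  shows "(K0 (r + h) - K0 r) / h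
     = integral\<^sup>L lborel (\<lambda>t. indicator {0..} t * ((exp (- (r + h) * cosh t) - exp (- r * cosh t)) / h))"
proof -
  have "K0 (r + h) - K0 r = integral\<^sup>L lborel (\<lambda>t. indicator {0..} t *\<^sub>R exp (- (r + h) * cosh t) - indicator {0..} t *\<^sub>R exp (- r * cosh t))"
    unfolding K0_def set_lebesgue_integral_def
    by (rule Bochner_Integration.integral_diff[symmetric]) (intro K0_integrable rh r)+
  then have "(K0 (r + h) - K0 r) / h = integral\<^sup>L lborel (\<lambda>t. (indicator {0..} t *\<^sub>R exp (- (r + h) * cosh t) - indicator {0..} t *\<^sub>R exp (- r * cosh t)) / h)"
    by simp
  also have "\<dots> = integral\<^sup>L lborel (\<lambda>t. indicator {0..} t * ((exp (- (r + h) * cosh t) - exp (- r * cosh t)) / h))"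
    by (intro Bochner_Integration.integral_cong) (auto simp: diff_divide_distrib split: split_indicator)
  finally show ?thesis .
qed

lemma K0_deriv:
  fixes r :: real
  assumes r: "0 < r"
  shows "DERIV K0 r :> - K1 r"
  unfolding DERIV_def tendsto_at_iff_sequentially
proof (intro allI impI)
  fix X :: "nat \<Rightarrow> real"
  assume X0: "\<forall>i. X i \<in> UNIV - {0}" and Xl: "X \<longlonglongrightarrow> 0"
  have "eventually (\<lambda>n. \<bar>X n\<bar> < r/2) sequentially"
    using Xl r unfolding tendsto_iff by (auto elim!: allE[of _ "r/2"])
  then obtain N where N: "\<And>n. n \<ge> N \<Longrightarrow> \<bar>X n\<bar> < r/2" unfolding eventually_sequentially by blast
  define Y where "Y n = X (n + N)" for n
  have Y0: "Y n \<noteq> 0" for n using X0 unfolding Y_def by auto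
  have Yb: "\<bar>Y n\<bar> \<le> r/2" for n using N[of "n + N"] unfolding Y_def by auto
  have Yl: "Y \<longlonglongrightarrow> 0" unfolding Y_def by (rule LIMSEQ_ignore_initial_segment[OF Xl])
  have Yat: "filterlim Y (at 0) sequentially"
    by (rule filterlim_atI[OF Yl]) (simp add: Y0)
  define s where "s n t = indicator {0..} t * ((exp (- (r + Y n) * cosh t) - exp (- r * cosh t)) / Y n)" for n t
  define f where "f t = indicator {0..} t * (- (cosh t * exp (- r * cosh t)))" for t :: real
  define w where "w t = indicator {0..} t *\<^sub>R (cosh t * exp (- (r/2) * cosh t))" for t :: real
  have eq: "(K0 (r + Y n) - K0 r) / Y n = integral\<^sup>L lborel (s n)" for n
    unfolding s_def using Yb[of n] r by (intro K0_quot) auto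
  have lim: "(\<lambda>n. integral\<^sup>L lborel (s n)) \<longlonglongrightarrow> integral\<^sup>L lborel f"
  proof (rule integral_dominated_convergence)
    show "f \<in> borel_measurable lborel" unfolding f_def by measurable
    show "s n \<in> borel_measurable lborel" for n unfolding s_def by measurable
    show "integrable lborel w" unfolding w_def using r by (intro K1_integrable) simp
    show "AE t in lborel. (\<lambda>n. s n t) \<longlonglongrightarrow> f t"
    proof (intro AE_I2)
      fix t :: real
      have d: "DERIV (\<lambda>x. exp (- x * cosh t)) r :> - cosh t * exp (- r * cosh t)"
        by (auto intro!: derivative_eq_intros)
      then have "((\<lambda>h. (exp (- (r + h) * cosh t) - exp (- r * cosh t)) / h) \<longlongrightarrow> - cosh t * exp (- r * cosh t)) (at 0)"
        unfolding DERIV_def by simp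
      from filterlim_compose[OF this Yat]
      have "(\<lambda>n. (exp (- (r + Y n) * cosh t) - exp (- r * cosh t)) / Y n) \<longlonglongrightarrow> - cosh t * exp (- r * cosh t)" .
      then have "(\<lambda>n. indicator {0..} t * ((exp (- (r + Y n) * cosh t) - exp (- r * cosh t)) / Y n))
          \<longlonglongrightarrow> indicator {0..} t * (- cosh t * exp (- r * cosh t))"
        by (intro tendsto_mult tendsto_const)
      then show "(\<lambda>n. s n t) \<longlonglongrightarrow> f t" unfolding s_def f_def by simp
    qed
    show "AE t in lborel. norm (s n t) \<le> w t" for n
    proof (intro AE_I2)
      fix t :: real
      have "\<bar>(exp (- (r + Y n) * cosh t) - exp (- r * cosh t)) / Y n\<bar> \<le> cosh t * exp (- (r/2) * cosh t)"
        using r Yb[of n] Y0[of n] cosh_real_pos[of t] by (intro quot_bound) auto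
      then show "norm (s n t) \<le> w t" unfolding s_def w_def by (simp split: split_indicator)
    qed
  qed
  have fK: "integral\<^sup>L lborel f = - K1 r"
    unfolding f_def K1_def set_lebesgue_integral_def
    by (simp add: integral_minus[symmetric] del: integral_minus)
  have "(\<lambda>n. (K0 (r + Y n) - K0 r) / Y n) \<longlonglongrightarrow> - K1 r"
    using lim unfolding eq fK .
  then have "(\<lambda>n. (K0 (r + X (n + N)) - K0 r) / X (n + N)) \<longlonglongrightarrow> - K1 r" unfolding Y_def .
  then have "(\<lambda>n. (K0 (r + X n) - K0 r) / X n) \<longlonglongrightarrow> - K1 r" by (rule LIMSEQ_offset)
  then show "((\<lambda>h. (K0 (r + h) - K0 r) / h) \<circ> X) \<longlonglongrightarrow> - K1 r" by (simp add: comp_def)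
qed

lemma K0'_eq: "0 < r \<Longrightarrow> K0' r = - K1 r"
  unfolding K0'_def by (rule DERIV_imp_deriv[OF K0_deriv])

lemma Basis_real2: "(Basis :: (real^2) set) = {axis 1 1, axis 2 1}"
proof -
  have "axis i 1 = axis 1 (1::real) \<or> axis i 1 = (axis 2 1 :: real^2)" for i :: 2
    using exhaust_2[of i] by auto
  then show ?thesis unfolding Basis_vec_def by auto
qed

lemma axis12_neq: "axis 1 (1::real) \<noteq> (axis 2 1 :: real^2)"
  by (simp add: axis_eq_axis)

lemma prod_Basis_real2: "(\<Prod>b\<in>(Basis :: (real^2) set). f b) = f (axis 1 1) * f (axis 2 1)"
  unfolding Basis_real2 using axis12_neq by simp

lemma inner_axis_real2: "(y::real^2) \<bullet> axis i 1 = y $ i"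
  by (simp add: inner_axis)

lemma nn_prod2:
  fixes g :: "real \<Rightarrow> ennreal"
  assumes [measurable]: "g \<in> borel_measurable borel"
  shows "(\<integral>\<^sup>+y. g (y$1) * g (y$2) \<partial>(lborel::(real^2) measure)) = (\<integral>\<^sup>+t. g t \<partial>lborel) ^ 2"
proof -
  have "(\<integral>\<^sup>+y. (\<Prod>b\<in>Basis. (\<lambda>_. g) b (y \<bullet> b)) \<partial>(lborel::(real^2) measure)) = (\<Prod>b\<in>(Basis::(real^2) set). (\<integral>\<^sup>+t. (\<lambda>_. g) b t \<partial>lborel))"
    by (rule nn_integral_lborel_prod) auto
  then show ?thesis by (simp add: prod_Basis_real2 inner_axis_real2 power2_eq_square)
qed

lemma exp_half_int:
  fixes a :: real assumes a: "0 < a"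
  shows "(\<integral>\<^sup>+t. ennreal (exp (- a * t)) * indicator {0..} t \<partial>lborel) = ennreal (1 / a)"
proof -
  have "(\<integral>\<^sup>+t. ennreal (exp (- a * t)) * indicator {0..} t \<partial>lborel) = ennreal (0 - (- exp (- a * 0) / a))"
  proof (rule nn_integral_FTC_atLeast)
    show "(\<lambda>t. exp (- a * t)) \<in> borel_measurable borel" by measurable
    show "DERIV (\<lambda>t. - exp (- a * t) / a) x :> exp (- a * x)" for x
      using a by (auto intro!: derivative_eq_intros simp: field_simps)
    show "0 \<le> exp (- a * x)" for x by simp
    show "((\<lambda>t. - exp (- a * t) / a) \<longlongrightarrow> 0) at_top" using a by real_asymp
  qed
  then show ?thesis by simp
qed

lemma reflect_nn:
  fixes h :: "real \<Rightarrow> ennreal"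
  assumes [measurable]: "h \<in> borel_measurable borel"
  shows "(\<integral>\<^sup>+t. h (- t) \<partial>lborel) = (\<integral>\<^sup>+t. h t \<partial>lborel)"
  using lb_affine1[of h "-1" 0] by simp

lemma split_sym:
  fixes h :: "real \<Rightarrow> ennreal"
  assumes [measurable]: "h \<in> borel_measurable borel"
  shows "(\<integral>\<^sup>+t. h \<bar>t\<bar> \<partial>lborel) \<le> 2 * (\<integral>\<^sup>+t. h t * indicator {0..} t \<partial>lborel)"
proof -
  have "(\<integral>\<^sup>+t. h \<bar>t\<bar> \<partial>lborel) \<le> (\<integral>\<^sup>+t. h t * indicator {0..} t + h (- t) * indicator {0..} (- t) \<partial>lborel)"
    by (intro nn_integral_mono) (auto split: split_indicator simp: abs_if)
  also have "\<dots> = (\<integral>\<^sup>+t. h t * indicator {0..} t \<partial>lborel) + (\<integral>\<^sup>+t. h (- t) * indicator {0..} (- t) \<partial>lborel)"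
    by (rule nn_integral_add) measurable
  also have "(\<integral>\<^sup>+t. h (- t) * indicator {0..} (- t) \<partial>lborel) = (\<integral>\<^sup>+t. h t * indicator {0..} t \<partial>lborel)"
    by (rule reflect_nn[of "\<lambda>t. h t * indicator {0..} t"]) measurable
  finally show ?thesis by (simp add: mult_2)
qed

lemma powr_half_nn:
  "(\<integral>\<^sup>+t. ennreal (indicator {0..1} t * t powr (-1/2)) \<partial>lborel) = 2"
proof -
  have h: "((\<lambda>x::real. x powr (-1/2)) has_integral (1 powr (-1/2 + 1) / (-1/2 + 1))) {0..1}"
    by (rule has_integral_powr_from_0) auto
  then have h1: "((\<lambda>x::real. x powr (-1/2)) has_integral 2) {0..1}" by simp
  have e: "(\<lambda>x::real. indicator {0..1} x * x powr (-1/2)) = (\<lambda>x. if x \<in> {0..1} then x powr (-1/2) else 0)"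
    by (auto simp: indicator_def fun_eq_iff)
  have h2: "((\<lambda>x::real. indicator {0..1} x * x powr (-1/2)) has_integral 2) UNIV"
    unfolding e has_integral_restrict_UNIV by (rule h1)
  have m: "(\<lambda>x::real. indicator {0..1} x * x powr (-1/2)) \<in> borel_measurable borel" by measurable
  have "integral\<^sup>N lborel (\<lambda>x::real. indicator {0..1} x * x powr (-1/2)) = ennreal 2"
    by (rule nn_integral_has_integral_lborel[OF m _ h2]) simp
  then show ?thesis by simp
qed

lemma exp_abs_int:
  fixes a :: real assumes a: "0 < a"
  shows "(\<integral>\<^sup>+t. ennreal (exp (- a * \<bar>t\<bar>)) \<partial>lborel) \<le> ennreal (2 / a)"
proof -
  have "(\<integral>\<^sup>+t. ennreal (exp (- a * \<bar>t\<bar>)) \<partial>lborel) \<le> 2 * (\<integral>\<^sup>+t. ennreal (exp (- a * t)) * indicator {0..} t \<partial>lborel)"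
    by (rule split_sym[of "\<lambda>t. ennreal (exp (- a * t))"]) measurable
  also have "\<dots> = 2 * ennreal (1 / a)" using exp_half_int[OF a] by simp
  also have "\<dots> = ennreal (2 / a)"
  proof -
    have "ennreal (2 * (1/a)) = ennreal 2 * ennreal (1/a)" by (rule ennreal_mult) (use a in auto)
    then show ?thesis by simp
  qed
  finally show ?thesis .
qed


definition phi :: "real \<Rightarrow> real \<Rightarrow> ennreal" where
  "phi a t = (if t = 0 then \<infinity> else ennreal (exp (- a * \<bar>t\<bar>) / sqrt \<bar>t\<bar>))"

lemma phi_meas[measurable]: "phi a \<in> borel_measurable borel"
  unfolding phi_def[abs_def] by measurable

lemma phi_int:
  assumes a: "0 < a"
  shows "(\<integral>\<^sup>+t. phi a t \<partial>lborel) \<le> ennreal (2 * (2 + 1 / a))"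
proof -
  have "(\<integral>\<^sup>+t. phi a t \<partial>lborel) = (\<integral>\<^sup>+t. ennreal (exp (- a * \<bar>t\<bar>) / sqrt \<bar>t\<bar>) \<partial>lborel)"
    by (rule nn_integral_cong_AE) (use AE_lborel_singleton[of 0] in \<open>auto elim!: eventually_mono simp: phi_def\<close>)
  also have "\<dots> \<le> 2 * (\<integral>\<^sup>+t. ennreal (exp (- a * t) / sqrt t) * indicator {0..} t \<partial>lborel)"
    by (rule split_sym[of "\<lambda>t. ennreal (exp (- a * t) / sqrt t)"]) measurable
  finally have first: "(\<integral>\<^sup>+t. phi a t \<partial>lborel) \<le> 2 * (\<integral>\<^sup>+t. ennreal (exp (- a * t) / sqrt t) * indicator {0..} t \<partial>lborel)" .
  have "(\<integral>\<^sup>+t. ennreal (exp (- a * t) / sqrt t) * indicator {0..} t \<partial>lborel)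
     \<le> (\<integral>\<^sup>+t. ennreal (indicator {0..1} t * t powr (-1/2)) + ennreal (exp (- a * t)) * indicator {0..} t \<partial>lborel)"
  proof (intro nn_integral_mono)
    fix t :: real
    show "ennreal (exp (- a * t) / sqrt t) * indicator {0..} t
        \<le> ennreal (indicator {0..1} t * t powr (-1/2)) + ennreal (exp (- a * t)) * indicator {0..} t"
    proof (cases "t \<le> 0")
      case True
      then show ?thesis by (cases "t = 0") (auto split: split_indicator)
    next
      case False
      then have t: "0 < t" by simp
      have pw: "t powr (-1/2) = 1 / sqrt t"
        using t by (simp add: powr_minus_divide powr_half_sqrt[symmetric] powr_minus)
      show ?thesis
      proof (cases "t \<le> 1")
        case True
        have "exp (- a * t) / sqrt t \<le> 1 / sqrt t"
          using t a by (intro divide_right_mono) auto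
        then have "ennreal (exp (- a * t) / sqrt t) \<le> ennreal (indicator {0..1} t * t powr (-1/2))"
          using t True pw by (intro ennreal_leI) simp
        moreover have "indicator {0..} t = (1::ennreal)" using t by auto
        ultimately show ?thesis by (simp add: add_increasing2)
      next
        case False
        have s1: "1 \<le> sqrt t" using False by simp
        have "exp (- a * t) / sqrt t \<le> exp (- a * t)"
          using mult_left_mono[OF s1, of "exp (- a * t)"] s1 by (simp add: divide_le_eq)
        then have le2: "ennreal (exp (- a * t) / sqrt t) \<le> ennreal (exp (- a * t))"
          by (rule ennreal_leI)
        have "indicator {0..1} t = (0::real)" "indicator {0..} t = (1::ennreal)" using False t by auto
        then show ?thesis using le2 by simp
      qed
    qed
  qed
  also have "\<dots> = (\<integral>\<^sup>+t. ennreal (indicator {0..1} t * t powr (-1/2)) \<partial>lborel) + (\<integral>\<^sup>+t. ennreal (exp (- a * t)) * indicator {0..} t \<partial>lborel)"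
    by (rule nn_integral_add) measurable
  also have "\<dots> = ennreal 2 + ennreal (1 / a)" using powr_half_nn exp_half_int[OF a] by simp
  finally have inner: "(\<integral>\<^sup>+t. ennreal (exp (- a * t) / sqrt t) * indicator {0..} t \<partial>lborel) \<le> ennreal 2 + ennreal (1 / a)" .
  note first
  also have "2 * (\<integral>\<^sup>+t. ennreal (exp (- a * t) / sqrt t) * indicator {0..} t \<partial>lborel) \<le> 2 * (ennreal 2 + ennreal (1 / a))"
    by (intro mult_left_mono inner) simp
  also have "2 * (ennreal 2 + ennreal (1 / a)) = ennreal (2 * (2 + 1 / a))"
    using ennreal_mult[of 2 "2 + 1/a"] ennreal_plus[of 2 "1/a"] a by simp
  finally show ?thesis .
qed

definition kS :: "real \<Rightarrow> real^2 \<Rightarrow> real" where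
  "kS s y = 6 * (exp (- s * norm y / 2) / norm y)"

definition kT :: "real \<Rightarrow> real \<Rightarrow> real^2 \<Rightarrow> real" where
  "kT b s y = 12 * b * exp (- s * norm y / 2)"

lemma kS_meas[measurable]: "kS s \<in> borel_measurable borel"
  unfolding kS_def[abs_def] by measurable

lemma kT_meas[measurable]: "kT b s \<in> borel_measurable borel"
  unfolding kT_def[abs_def] by measurable

lemma exp_split2:
  fixes y :: "real^2" assumes s: "0 < s"
  shows "exp (- s * norm y / 2) \<le> exp (- (s/4) * \<bar>y$1\<bar>) * exp (- (s/4) * \<bar>y$2\<bar>)"
proof -
  have "\<bar>y$1\<bar> \<le> norm y" "\<bar>y$2\<bar> \<le> norm y" by (rule component_le_norm_cart)+
  then have "\<bar>y$1\<bar> + \<bar>y$2\<bar> \<le> norm y * 2" by linarith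
  then have h: "s * \<bar>y$1\<bar> + s * \<bar>y$2\<bar> \<le> s * (norm y * 2)"
    using mult_left_mono[of "\<bar>y$1\<bar> + \<bar>y$2\<bar>" "norm y * 2" s] s by (simp add: algebra_simps)
  have "- s * norm y / 2 \<le> - (s/4) * \<bar>y$1\<bar> + - (s/4) * \<bar>y$2\<bar>" using h
    by (simp add: field_simps)
  then show ?thesis by (simp add: exp_add[symmetric])
qed

lemma kT_pt:
  fixes y :: "real^2" assumes s: "0 < s" and b: "0 \<le> b"
  shows "ennreal (kT b s y) \<le> ennreal (12 * b) * (ennreal (exp (- (s/4) * \<bar>y$1\<bar>)) * ennreal (exp (- (s/4) * \<bar>y$2\<bar>)))"
proof -
  have "kT b s y \<le> (12 * b) * (exp (- (s/4) * \<bar>y$1\<bar>) * exp (- (s/4) * \<bar>y$2\<bar>))"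
    unfolding kT_def using exp_split2[OF s, of y] b by (simp add: mult_left_mono)
  then show ?thesis using b by (simp add: ennreal_mult[symmetric] ennreal_leI)
qed

lemma kT_int:
  assumes s: "0 < s" and b: "0 \<le> b"
  shows "(\<integral>\<^sup>+y. ennreal (kT b s y) \<partial>lborel) \<le> ennreal (768 * b / s^2)"
proof -
  have "(\<integral>\<^sup>+y. ennreal (kT b s y) \<partial>lborel)
      \<le> (\<integral>\<^sup>+y. ennreal (12 * b) * (ennreal (exp (- (s/4) * \<bar>y$1\<bar>)) * ennreal (exp (- (s/4) * \<bar>y$2\<bar>))) \<partial>(lborel::(real^2) measure))"
    by (intro nn_integral_mono kT_pt s b)
  also have "\<dots> = ennreal (12 * b) * (\<integral>\<^sup>+y. ennreal (exp (- (s/4) * \<bar>y$1\<bar>)) * ennreal (exp (- (s/4) * \<bar>y$2\<bar>)) \<partial>(lborel::(real^2) measure))"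
    by (rule nn_integral_cmult) measurable
  also have "(\<integral>\<^sup>+y. ennreal (exp (- (s/4) * \<bar>y$1\<bar>)) * ennreal (exp (- (s/4) * \<bar>y$2\<bar>)) \<partial>(lborel::(real^2) measure))
      = (\<integral>\<^sup>+t. ennreal (exp (- (s/4) * \<bar>t\<bar>)) \<partial>lborel) ^ 2"
    by (rule nn_prod2[of "\<lambda>t. ennreal (exp (- (s/4) * \<bar>t\<bar>))"]) measurable
  also have "(\<integral>\<^sup>+t. ennreal (exp (- (s/4) * \<bar>t\<bar>)) \<partial>lborel) ^ 2 \<le> ennreal (2 / (s/4)) ^ 2"
    using s by (intro power_mono exp_abs_int) auto
  finally have "(\<integral>\<^sup>+y. ennreal (kT b s y) \<partial>lborel) \<le> ennreal (12 * b) * ennreal (2 / (s/4)) ^ 2"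
    by (simp add: mult_left_mono)
  also have "\<dots> = ennreal (768 * b / s^2)"
    using s b by (simp add: ennreal_power ennreal_mult[symmetric] power_divide field_simps)
  finally show ?thesis .
qed

lemma enn_mult6: "0 \<le> a \<Longrightarrow> 0 \<le> b \<Longrightarrow> ennreal (6 * (a * b)) = ennreal 6 * (ennreal a * ennreal b)"
  for a b :: real by (simp add: ennreal_mult)

lemma kS_pt:
  fixes y :: "real^2" assumes s: "0 < s"
  shows "ennreal (kS s y) \<le> 6 * (phi (s/4) (y$1) * phi (s/4) (y$2))"
proof (cases "y$1 = 0 \<or> y$2 = 0")
  case True
  show ?thesis
  proof (cases "y = 0")
    case True then show ?thesis by (simp add: kS_def)
  next
    case False
    have pos: "phi (s/4) t \<noteq> 0" for t
    proof (cases "t = 0")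
      case False
      then have "0 < exp (- (s/4) * \<bar>t\<bar>) / sqrt \<bar>t\<bar>" by simp
      then have "ennreal (exp (- (s/4) * \<bar>t\<bar>) / sqrt \<bar>t\<bar>) \<noteq> 0"
        by (simp only: ennreal_eq_0_iff not_le)
      then show ?thesis using False unfolding phi_def by simp
    qed (simp add: phi_def)
    have "phi (s/4) (y$1) * phi (s/4) (y$2) = \<infinity>"
      using True pos[of "y$1"] pos[of "y$2"] by (auto simp: phi_def)
    then show ?thesis by simp
  qed
next
  case False
  then have y1: "y$1 \<noteq> 0" and y2: "y$2 \<noteq> 0" by auto
  have n1: "\<bar>y$1\<bar> \<le> norm y" and n2: "\<bar>y$2\<bar> \<le> norm y" by (rule component_le_norm_cart)+
  have ny: "0 < norm y" using y1 n1 by linarith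
  have "sqrt \<bar>y$1\<bar> * sqrt \<bar>y$2\<bar> \<le> norm y"
  proof -
    have "sqrt \<bar>y$1\<bar> * sqrt \<bar>y$2\<bar> = sqrt (\<bar>y$1\<bar> * \<bar>y$2\<bar>)" by (simp add: real_sqrt_mult)
    also have "\<dots> \<le> sqrt (norm y * norm y)" using n1 n2 by (intro real_sqrt_le_mono mult_mono) auto
    also have "\<dots> = norm y" by simp
    finally show ?thesis .
  qed
  then have inv: "1 / norm y \<le> 1 / (sqrt \<bar>y$1\<bar> * sqrt \<bar>y$2\<bar>)"
    using y1 y2 ny by (intro divide_left_mono) (auto intro!: mult_pos_pos)
  have "exp (- s * norm y / 2) / norm y = exp (- s * norm y / 2) * (1 / norm y)" by simp
  also have "\<dots> \<le> (exp (- (s/4) * \<bar>y$1\<bar>) * exp (- (s/4) * \<bar>y$2\<bar>)) * (1 / (sqrt \<bar>y$1\<bar> * sqrt \<bar>y$2\<bar>))"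
    by (rule mult_mono[OF exp_split2[OF s, of y] inv]) auto
  also have "\<dots> = (exp (- (s/4) * \<bar>y$1\<bar>) / sqrt \<bar>y$1\<bar>) * (exp (- (s/4) * \<bar>y$2\<bar>) / sqrt \<bar>y$2\<bar>)"
    by simp
  finally have "kS s y \<le> 6 * ((exp (- (s/4) * \<bar>y$1\<bar>) / sqrt \<bar>y$1\<bar>) * (exp (- (s/4) * \<bar>y$2\<bar>) / sqrt \<bar>y$2\<bar>))"
    unfolding kS_def by simp
  then have le: "ennreal (kS s y) \<le> ennreal (6 * ((exp (- (s/4) * \<bar>y$1\<bar>) / sqrt \<bar>y$1\<bar>) * (exp (- (s/4) * \<bar>y$2\<bar>) / sqrt \<bar>y$2\<bar>)))"
    by (rule ennreal_leI)
  have p1: "phi (s/4) (y$1) = ennreal (exp (- (s/4) * \<bar>y$1\<bar>) / sqrt \<bar>y$1\<bar>)" using y1 by (simp add: phi_def)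
  have p2: "phi (s/4) (y$2) = ennreal (exp (- (s/4) * \<bar>y$2\<bar>) / sqrt \<bar>y$2\<bar>)" using y2 by (simp add: phi_def)
  have "ennreal (6 * ((exp (- (s/4) * \<bar>y$1\<bar>) / sqrt \<bar>y$1\<bar>) * (exp (- (s/4) * \<bar>y$2\<bar>) / sqrt \<bar>y$2\<bar>)))
     = ennreal 6 * (ennreal (exp (- (s/4) * \<bar>y$1\<bar>) / sqrt \<bar>y$1\<bar>) * ennreal (exp (- (s/4) * \<bar>y$2\<bar>) / sqrt \<bar>y$2\<bar>))"
    by (rule enn_mult6) simp_all
  then show ?thesis using le unfolding p1 p2 by simp
qed

lemma kS_int:
  assumes s: "0 < s"
  shows "(\<integral>\<^sup>+y. ennreal (kS s y) \<partial>lborel) < \<infinity>"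
proof -
  have "(\<integral>\<^sup>+y. ennreal (kS s y) \<partial>lborel) \<le> (\<integral>\<^sup>+y. 6 * (phi (s/4) (y$1) * phi (s/4) (y$2)) \<partial>(lborel::(real^2) measure))"
    by (intro nn_integral_mono kS_pt s)
  also have "\<dots> = 6 * (\<integral>\<^sup>+y. phi (s/4) (y$1) * phi (s/4) (y$2) \<partial>(lborel::(real^2) measure))"
    by (rule nn_integral_cmult) measurable
  also have "\<dots> = 6 * (\<integral>\<^sup>+t. phi (s/4) t \<partial>lborel) ^ 2"
    by (simp add: nn_prod2)
  also have "\<dots> \<le> 6 * ennreal (2 * (2 + 1 / (s/4))) ^ 2"
    using s by (intro mult_left_mono power_mono phi_int) auto
  also have "\<dots> < \<infinity>"
  proof -
    have e1: "ennreal (2 * (2 + 1 / (s/4))) ^ 2 = ennreal ((2 * (2 + 1 / (s/4))) ^ 2)"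
      by (rule ennreal_power) (use s in simp)
    show ?thesis unfolding e1 infinity_ennreal_def
      apply (rule ennreal_mult_less_top[THEN iffD2])
      apply (intro disjI2 conjI)
       apply simp
      apply (rule ennreal_less_top)
      done
  qed
  finally show ?thesis .
qed

lemma cscale_cont: "continuous_on UNIV (\<lambda>p::complex \<times> (complex^2^2). fst p *c snd p)"
  unfolding cscale_def by (intro continuous_intros)

lemma mmult_cont: "continuous_on UNIV (\<lambda>p::(complex^2^2) \<times> (complex^2^2). fst p ** snd p)"
  unfolding matrix_matrix_mult_def by (intro continuous_intros)

lemma cscale_meas[measurable (raw)]:
  "f \<in> borel_measurable N \<Longrightarrow> A \<in> borel_measurable N \<Longrightarrow> (\<lambda>z. f z *c A z) \<in> borel_measurable N"
  by (rule borel_measurable_continuous_Pair[OF _ _ cscale_cont])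

lemma mmult_meas[measurable (raw)]:
  fixes A B :: "'a \<Rightarrow> complex^2^2"
  shows "A \<in> borel_measurable N \<Longrightarrow> B \<in> borel_measurable N \<Longrightarrow> (\<lambda>z. A z ** B z) \<in> borel_measurable N"
  by (rule borel_measurable_continuous_Pair[OF _ _ mmult_cont])

lemma vec_nth_cont: "continuous_on UNIV (\<lambda>y::real^2. y $ i)"
  by (intro continuous_intros)

lemma vec_nth_meas[measurable (raw)]:
  fixes f :: "'a \<Rightarrow> real^2"
  shows "f \<in> borel_measurable M \<Longrightarrow> (\<lambda>x. f x $ i) \<in> borel_measurable M"
  by (rule measurable_compose[of f M borel "\<lambda>y. y$i"]) (auto intro: borel_measurable_continuous_onI vec_nth_cont)

lemma reflect2_alt: "reflect2 x = x - (2 * x$2) *\<^sub>R axis 2 1"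
  unfolding reflect2_def by (simp add: vec_eq_iff forall_2 axis_def)

lemma Atilde_alt: "Atilde z = (- (z$2)) *\<^sub>R axis 1 1"
  unfolding Atilde_def by (simp add: vec_eq_iff forall_2 axis_def)

definition KF :: "real \<Rightarrow> real^2 \<Rightarrow> complex^2^2" where
  "KF s z = (\<i> * complex_of_real s / (2 * complex_of_real pi) * complex_of_real (K0 (s * norm z))) *c id2
   - (\<i> * complex_of_real s / (2 * complex_of_real pi) * complex_of_real (if z = 0 then 0 else - K1 (s * norm z)))
       *c ((z$1 / norm z) *\<^sub>R pauli1 + (z$2 / norm z) *\<^sub>R pauli2)"

lemma KF_meas[measurable]: "KF s \<in> borel_measurable borel"
  unfolding KF_def[abs_def] by measurable

lemma cscale_zero: "c *c 0 = 0"
  unfolding cscale_def by (simp add: vec_eq_iff)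

lemma Kfrak0_KF: "0 < s \<Longrightarrow> Kfrak0 x x' s = KF s (x - x')"
proof (cases "x = x'")
  case True
  then show ?thesis by (simp add: Kfrak0_def KF_def sigma_dot_def cscale_zero)
next
  case False
  assume s: "0 < s"
  have "0 < s * norm (x - x')" using False s by simp
  then have "K0' (s * norm (x - x')) = - K1 (s * norm (x - x'))" by (rule K0'_eq)
  then show ?thesis using False by (simp add: Kfrak0_def KF_def sigma_dot_def)
qed

lemma E_borel: "E \<in> sets borel"
  unfolding E_def by (intro borel_closed closed_halfspace_component_ge_cart)

lemma S_kernel_alt: "0 < s \<Longrightarrow> S_kernel b s x x' =
   exp (\<i> * complex_of_real (b * ((x'$1 - x$1) * x'$2))) *c (KF s (x - (x' - (2 * x'$2) *\<^sub>R axis 2 1)) ** pauli1 + KF s (x - x'))"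
  unfolding S_kernel_def KfrakE_def phi2_def by (simp add: Kfrak0_KF reflect2_alt)

lemma T_kernel_alt: "0 < s \<Longrightarrow> T_kernel b s x x' =
   exp (\<i> * complex_of_real (b * ((x'$1 - x$1) * x'$2))) *c
    (sigma_dot (- b *\<^sub>R ((- ((x - x')$2)) *\<^sub>R axis 1 1)) ** (KF s (x - (x' - (2 * x'$2) *\<^sub>R axis 2 1)) ** pauli1 + KF s (x - x')))"
  unfolding T_kernel_def KfrakE_def phi2_def by (simp add: Kfrak0_KF reflect2_alt Atilde_alt)

lemma S_meas:
  assumes s: "0 < s"
  shows "(\<lambda>p. S_kernel b s (fst p) (snd p)) \<in> borel_measurable (lebesgue_on E \<Otimes>\<^sub>M lebesgue_on E)"
proof -
  have idm[measurable]: "(\<lambda>x. x) \<in> borel_measurable (lebesgue_on E)" by (rule id_leb_meas)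
  show ?thesis unfolding S_kernel_alt[OF s] sigma_dot_def by measurable
qed

lemma T_meas:
  assumes s: "0 < s"
  shows "(\<lambda>p. T_kernel b s (fst p) (snd p)) \<in> borel_measurable (lebesgue_on E \<Otimes>\<^sub>M lebesgue_on E)"
proof -
  have idm[measurable]: "(\<lambda>x. x) \<in> borel_measurable (lebesgue_on E)" by (rule id_leb_meas)
  show ?thesis unfolding T_kernel_alt[OF s] sigma_dot_def by measurable
qed

lemma norm_real2: "norm (y::real^2) = sqrt ((y$1)^2 + (y$2)^2)"
  by (simp add: norm_vec_def L2_set_def sum_2)

lemma Kfrak0_bound:
  assumes s: "0 < s" and z: "x \<noteq> x'"
  shows "mn (Kfrak0 x x' s) \<le> 2 * (exp (- s * norm (x - x') / 2) / norm (x - x'))"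
proof -
  define n where "n = norm (x - x')"
  have n: "0 < n" using z unfolding n_def by simp
  define r where "r = s * n"
  have r: "0 < r" unfolding r_def using s n by simp
  define c where "c = s / (2 * pi)"
  have c: "0 < c" unfolding c_def using s by simp
  define Q where "Q = exp (- s * n / 2) / n"
  have Q0: "0 \<le> Q" unfolding Q_def using n by simp
  define B where "B = 2 * exp (- r / 2) / r"
  have BQ: "B = 2 * Q / s" unfolding B_def Q_def r_def using s n by (simp add: field_simps)
  have B0: "\<bar>K0 r\<bar> \<le> B" unfolding B_def by (rule K0_bound[OF r])
  have B1: "\<bar>K0' r\<bar> \<le> B" unfolding B_def K0'_eq[OF r] using K1_bound[OF r] by simp
  define u where "u = (1 / n) *\<^sub>R (x - x')"
  have nu: "norm u = 1" unfolding u_def n_def using z by simp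
  have "\<bar>u$1\<bar> \<le> 1" "\<bar>u$2\<bar> \<le> 1" using component_le_norm_cart[of u] nu by auto
  then have "2 * (\<bar>u$1\<bar> + \<bar>u$2\<bar>) \<le> 2 * (1 + 1)" by (intro mult_left_mono add_mono) auto
  then have ms: "mn (sigma_dot u) \<le> 4" using mn_sigma[of u] by simp
  have na: "norm (\<i> * complex_of_real s / (2 * complex_of_real pi) * complex_of_real t) = c * \<bar>t\<bar>" for t
    unfolding c_def using s by (simp add: norm_mult norm_divide)
  have "mn (Kfrak0 x x' s) \<le> mn ((\<i> * complex_of_real s / (2 * complex_of_real pi) * complex_of_real (K0 r)) *c id2)
        + mn ((\<i> * complex_of_real s / (2 * complex_of_real pi) * complex_of_real (K0' r)) *c sigma_dot u)"
    unfolding Kfrak0_def r_def n_def u_def by (rule mn_diff)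
  also have "\<dots> = c * \<bar>K0 r\<bar> * 2 + c * \<bar>K0' r\<bar> * mn (sigma_dot u)"
    by (simp only: mn_cscale na mn_id2)
  also have "\<dots> \<le> c * B * 2 + c * B * 4"
    using B0 B1 ms c mn_nonneg[of "sigma_dot u"]
    by (intro add_mono mult_mono mult_left_mono) auto
  also have "\<dots> = (6 / pi) * Q" unfolding c_def BQ using s by (simp add: field_simps)
  also have "\<dots> \<le> 2 * Q" using Q0 pi_gt3 by (intro mult_right_mono) (auto simp: field_simps)
  finally show ?thesis unfolding Q_def n_def .
qed

lemma Q_mono:
  fixes s a b :: real
  assumes s: "0 < s" and ab: "0 < a" "a \<le> b"
  shows "exp (- s * b / 2) / b \<le> exp (- s * a / 2) / a"
proof -
  have "exp (- s * b / 2) \<le> exp (- s * a / 2)" using s ab by (simp add: mult_left_mono)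
  then show ?thesis using ab by (intro frac_le) auto
qed

lemma reflect_norm:
  assumes "x \<in> E" "x' \<in> E"
  shows "norm (x - x') \<le> norm (x - reflect2 x')"
proof -
  have "0 \<le> x$2" "0 \<le> x'$2" using assms by (auto simp: E_def)
  then have "(x$2 - x'$2)^2 \<le> (x$2 + x'$2)^2" by (simp add: power2_eq_square algebra_simps)
  then show ?thesis unfolding norm_real2 reflect2_def by (simp add: real_sqrt_le_mono)
qed

lemma KfrakE_bound:
  assumes s: "0 < s" and xE: "x \<in> E" and x'E: "x' \<in> E" and z: "x \<noteq> x'"
  shows "mn (KfrakE x x' s) \<le> kS s (x - x')"
proof -
  have n: "0 < norm (x - x')" using z by simp
  have rn: "norm (x - x') \<le> norm (x - reflect2 x')" by (rule reflect_norm[OF xE x'E])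
  then have z2: "x \<noteq> reflect2 x'" using n by auto
  have b1: "mn (Kfrak0 x (reflect2 x') s) \<le> 2 * (exp (- s * norm (x - x') / 2) / norm (x - x'))"
    using Kfrak0_bound[OF s z2] Q_mono[OF s n rn] by linarith
  have b2: "mn (Kfrak0 x x' s) \<le> 2 * (exp (- s * norm (x - x') / 2) / norm (x - x'))"
    by (rule Kfrak0_bound[OF s z])
  have "mn (KfrakE x x' s) \<le> mn (Kfrak0 x (reflect2 x') s ** pauli1) + mn (Kfrak0 x x' s)"
    unfolding KfrakE_def by (rule mn_add)
  also have "\<dots> \<le> mn (Kfrak0 x (reflect2 x') s) * 2 + mn (Kfrak0 x x' s)"
    using mn_mult[of "Kfrak0 x (reflect2 x') s" pauli1] by (simp add: mn_pauli1)
  also have "\<dots> \<le> kS s (x - x')" using b1 b2 unfolding kS_def by linarith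
  finally show ?thesis .
qed

lemma norm_exp_i: "norm (exp (\<i> * complex_of_real t)) = 1"
  by (simp add: norm_exp_i_times)

lemma S_bound:
  assumes s: "0 < s" and xE: "x \<in> E" and x'E: "x' \<in> E" and z: "x \<noteq> x'"
  shows "mn (S_kernel b s x x') \<le> kS s (x - x')"
  unfolding S_kernel_def mn_cscale norm_exp_i using KfrakE_bound[OF assms] by simp

lemma T_bound:
  assumes s: "0 < s" and b: "0 \<le> b" and xE: "x \<in> E" and x'E: "x' \<in> E" and z: "x \<noteq> x'"
  shows "mn (T_kernel b s x x') \<le> kT b s (x - x')"
proof -
  define n where "n = norm (x - x')"
  have n: "0 < n" using z unfolding n_def by simp
  have z2: "\<bar>(x - x')$2\<bar> \<le> n" unfolding n_def by (rule component_le_norm_cart)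
  have "mn (sigma_dot (- b *\<^sub>R Atilde (x - x'))) \<le> 2 * (\<bar>b * (x - x')$2\<bar> + 0)"
    using mn_sigma[of "- b *\<^sub>R Atilde (x - x')"] by (simp add: Atilde_def abs_mult abs_minus_commute)
  also have "\<dots> \<le> 2 * (b * n)" using b z2 by (simp add: abs_mult mult_left_mono)
  finally have ms: "mn (sigma_dot (- b *\<^sub>R Atilde (x - x'))) \<le> 2 * (b * n)" .
  have mk: "mn (KfrakE x x' s) \<le> 6 * (exp (- s * n / 2) / n)"
    using KfrakE_bound[OF s xE x'E z] unfolding kS_def n_def .
  have "mn (T_kernel b s x x') = mn (sigma_dot (- b *\<^sub>R Atilde (x - x')) ** KfrakE x x' s)"
    unfolding T_kernel_def mn_cscale norm_exp_i by simp
  also have "\<dots> \<le> mn (sigma_dot (- b *\<^sub>R Atilde (x - x'))) * mn (KfrakE x x' s)" by (rule mn_mult)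
  also have "\<dots> \<le> (2 * (b * n)) * (6 * (exp (- s * n / 2) / n))"
    using ms mk b n by (intro mult_mono mn_nonneg) auto
  also have "\<dots> = kT b s (x - x')" unfolding kT_def n_def[symmetric] using n by (simp add: field_simps)
  finally show ?thesis .
qed

lemma AE_neq:
  assumes S: "S \<in> sets borel" and x: "x \<in> S"
  shows "AE x' in lebesgue_on S. x' \<noteq> x \<and> x' \<in> S"
proof -
  have "AE x' in completion lborel. x' \<noteq> x" by (rule AE_completion[OF AE_lborel_singleton])
  then have "AE x' in lebesgue_on S. x' \<noteq> x"
    using S by (subst AE_restrict_space_iff) (auto elim: eventually_mono)
  moreover have "AE x' in lebesgue_on S. x' \<in> S" using AE_space[of "lebesgue_on S"] by simp
  ultimately show ?thesis by eventually_elim auto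
qed

lemma S_bounded:
  assumes lam: "0 < lam"
  shows "\<exists>M. bounded_int_op E (S_kernel b (sqrt lam)) M"
proof -
  define s where "s = sqrt lam"
  have s: "0 < s" unfolding s_def using lam by simp
  define X where "X = (\<integral>\<^sup>+y. ennreal (kS s y) \<partial>lborel)"
  have X: "X < \<infinity>" unfolding X_def by (rule kS_int[OF s])
  have "bounded_int_op E (S_kernel b s) (enn2real X)"
  proof (rule schur)
    show "E \<in> sets borel" by (rule E_borel)
    show "(\<lambda>p. S_kernel b s (fst p) (snd p)) \<in> borel_measurable (lebesgue_on E \<Otimes>\<^sub>M lebesgue_on E)"
      by (rule S_meas[OF s])
    show "kS s \<in> borel_measurable borel" by measurable
    show "0 \<le> kS s y" for y unfolding kS_def by simp
    show "(\<integral>\<^sup>+y. ennreal (kS s y) \<partial>lborel) \<le> ennreal (enn2real X)"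
      using X unfolding X_def by simp
    show "0 \<le> enn2real X" by simp
    show "AE x' in lebesgue_on E. mn (S_kernel b s x x') \<le> kS s (x - x')" if "x \<in> E" for x
      using AE_neq[OF E_borel that]
      by eventually_elim (use that s in \<open>auto intro!: S_bound\<close>)
  qed
  then show ?thesis unfolding s_def by blast
qed

lemma T_bounded:
  assumes lam: "0 < lam" and b: "0 \<le> b"
  shows "bounded_int_op E (T_kernel b (sqrt lam)) (768 * b / lam)"
proof -
  define s where "s = sqrt lam"
  have s: "0 < s" unfolding s_def using lam by simp
  have s2: "s^2 = lam" unfolding s_def using lam by simp
  have "bounded_int_op E (T_kernel b s) (768 * b / s^2)"
  proof (rule schur)
    show "E \<in> sets borel" by (rule E_borel)
    show "(\<lambda>p. T_kernel b s (fst p) (snd p)) \<in> borel_measurable (lebesgue_on E \<Otimes>\<^sub>M lebesgue_on E)"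
      by (rule T_meas[OF s])
    show "kT b s \<in> borel_measurable borel" by measurable
    show "0 \<le> kT b s y" for y unfolding kT_def using b by simp
    show "(\<integral>\<^sup>+y. ennreal (kT b s y) \<partial>lborel) \<le> ennreal (768 * b / s^2)"
      by (rule kT_int[OF s b])
    show "0 \<le> 768 * b / s^2" using b by simp
    show "AE x' in lebesgue_on E. mn (T_kernel b s x x') \<le> kT b s (x - x')" if "x \<in> E" for x
      using AE_neq[OF E_borel that]
      by eventually_elim (use that s b in \<open>auto intro!: T_bound\<close>)
  qed
  then show ?thesis unfolding s_def[symmetric] s2 unfolding s_def .
qed

theorem lemma2p2:
  shows "(\<forall>b lam. b \<ge> 0 \<longrightarrow> lam > 0 \<longrightarrow>
            (\<exists>M. bounded_int_op E (S_kernel b (sqrt lam)) M) \<and>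
            (\<exists>M. bounded_int_op E (T_kernel b (sqrt lam)) M)) \<and>
         (\<exists>C>0. \<forall>b lam. b > 0 \<longrightarrow> lam > 0 \<longrightarrow>
            bounded_int_op E (T_kernel b (sqrt lam)) (C * b / lam))"
proof (intro conjI allI impI)
  fix b lam :: real assume b: "0 \<le> b" and lam: "0 < lam"
  show "\<exists>M. bounded_int_op E (S_kernel b (sqrt lam)) M" by (rule S_bounded[OF lam])
  show "\<exists>M. bounded_int_op E (T_kernel b (sqrt lam)) M" using T_bounded[OF lam b] by blast
next
  show "\<exists>C>0. \<forall>b lam. b > 0 \<longrightarrow> lam > 0 \<longrightarrow> bounded_int_op E (T_kernel b (sqrt lam)) (C * b / lam)"
    by (rule exI[of _ 768]) (auto intro: T_bounded)
qed

end
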